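(* If $0\le p<t\le 1$, then there exists a stake sequence $\gamma$ with $\pi(p,t)=\mathbf P(S_\gamma\ge t)$. Furthermore, for fixed $p$, the function $t\mapsto\pi(p,t)$ is left-continuous.
   Context: Let $\beta_1,\beta_2,\ldots$ be independent Bernoulli random variables with success probability $p$. A stake sequence is a sequence $\gamma=(c_1,c_2,\ldots)$ of non-negative reals with $c_1\ge c_2\ge\cdots$ and $\sum_i c_i=1$; write $S_\gamma=\sum_i c_i\beta_i$. For $0\le p\le t\le 1$ define $\pi(p,t)=\sup\{\mathbf P(S_\gamma\ge t)\mid \gamma \text{ a stake sequence}\}$. *)

theory Defs
  imports "HOL-Probability.Probability"
begin

text \<open>The joint law of the i.i.d. Bernoulli(p) sequence beta_1, beta_2, ...
  (indexed from 0 here), as a probability measure on nat => bool.\<close>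
definition bern_seq :: "real \<Rightarrow> (nat \<Rightarrow> bool) measure" where
  "bern_seq p = (\<Pi>\<^sub>M i\<in>(UNIV::nat set). measure_pmf (bernoulli_pmf p))"

definition stake_seq :: "(nat \<Rightarrow> real) \<Rightarrow> bool" where
  "stake_seq c \<longleftrightarrow> (\<forall>i. 0 \<le> c i) \<and> decseq c \<and> c sums 1"

definition S_gamma :: "(nat \<Rightarrow> real) \<Rightarrow> (nat \<Rightarrow> bool) \<Rightarrow> real" where
  "S_gamma c \<omega> = (\<Sum>i. c i * (if \<omega> i then 1 else 0))"

definition prob_ge :: "real \<Rightarrow> (nat \<Rightarrow> real) \<Rightarrow> real \<Rightarrow> real" where
  "prob_ge p c t = measure (bern_seq p) {\<omega> \<in> space (bern_seq p). S_gamma c \<omega> \<ge> t}"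

definition pi_fun :: "real \<Rightarrow> real \<Rightarrow> real" where
  "pi_fun p t = Sup {prob_ge p c t | c. stake_seq c}"

end

theory Submission
  imports Defs
begin

lemma bern_ps: "0 \<le> p \<Longrightarrow> p \<le> 1 \<Longrightarrow> prob_space (bern_seq p)"
  unfolding bern_seq_def by (intro prob_space_PiM measure_pmf.prob_space_axioms)

lemma space_bern[simp]: "space (bern_seq p) = UNIV"
  unfolding bern_seq_def by (simp add: space_PiM)

lemma meas_ind[measurable]: "(\<lambda>\<omega>. if \<omega> i then (1::real) else 0) \<in> borel_measurable (bern_seq p)"
proof -
  have "(\<lambda>\<omega>. \<omega> i) \<in> measurable (bern_seq p) (measure_pmf (bernoulli_pmf p))"
    unfolding bern_seq_def by (rule measurable_component_singleton) simp
  moreover have "(\<lambda>b. if b then (1::real) else 0) \<in> borel_measurable (measure_pmf (bernoulli_pmf p))"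
    by simp
  ultimately show ?thesis by (rule measurable_compose)
qed

lemma meas_ind'[measurable]: "(\<lambda>\<omega>. a * (if \<omega> i then (1::real) else 0)) \<in> borel_measurable (bern_seq p)"
  by measurable

lemma meas_fsum[measurable]: "(\<lambda>\<omega>. \<Sum>i\<in>I. a i * (if \<omega> i then (1::real) else 0)) \<in> borel_measurable (bern_seq p)"
  by (rule borel_measurable_sum) (rule meas_ind')


lemma summable_ind:
  assumes "summable a" "\<And>i. a i \<ge> 0"
  shows "summable (\<lambda>i. a i * (if \<omega> i then (1::real) else 0))"
  by (rule summable_comparison_test'[OF assms(1)]) (auto simp: assms(2))

lemma meas_S:
  assumes "summable a" "\<And>i. a i \<ge> 0"
  shows "S_gamma a \<in> borel_measurable (bern_seq p)"
proof -
  have "\<And>\<omega>. (\<lambda>n. \<Sum>i<n. a i * (if \<omega> i then (1::real) else 0)) \<longlonglongrightarrow> S_gamma a \<omega>"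
    unfolding S_gamma_def using summable_ind[OF assms] by (simp add: summable_LIMSEQ)
  then show ?thesis
    by (rule borel_measurable_LIMSEQ_real) (rule meas_fsum)
qed

lemma indep_coords:
  assumes "0 \<le> p" "p \<le> 1"
  shows "prob_space.indep_vars (bern_seq p) (\<lambda>_. measure_pmf (bernoulli_pmf p)) (\<lambda>i \<omega>. \<omega> i) UNIV"
proof -
  interpret P: product_prob_space "\<lambda>_::nat. measure_pmf (bernoulli_pmf p)" UNIV
    by unfold_locales
  interpret prob_space "bern_seq p" using bern_ps[OF assms] .
  have rv: "\<And>i. random_variable (measure_pmf (bernoulli_pmf p)) (\<lambda>\<omega>. \<omega> i)"
    unfolding bern_seq_def by (rule measurable_component_singleton) simp
  show ?thesis
  proof (subst indep_vars_iff_distr_eq_PiM)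
    show "distr (bern_seq p) (\<Pi>\<^sub>M i\<in>UNIV. measure_pmf (bernoulli_pmf p)) (\<lambda>x. \<lambda>i\<in>UNIV. x i) =
      (\<Pi>\<^sub>M i\<in>UNIV. distr (bern_seq p) (measure_pmf (bernoulli_pmf p)) (\<lambda>\<omega>. \<omega> i))"
      using P.PiM_component[of] unfolding bern_seq_def
      by (simp add: restrict_UNIV[abs_def] distr_id[unfolded id_def])
  qed (simp, rule rv)
qed


lemma expect_ind:
  assumes "0 \<le> p" "p \<le> 1"
  shows "integral\<^sup>L (bern_seq p) (\<lambda>\<omega>. a * (if \<omega> i then (1::real) else 0)) = a * p"
proof -
  interpret P: product_prob_space "\<lambda>_::nat. measure_pmf (bernoulli_pmf p)" UNIV
    by unfold_locales
  have rv: "(\<lambda>\<omega>. \<omega> i) \<in> measurable (bern_seq p) (measure_pmf (bernoulli_pmf p))"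
    unfolding bern_seq_def by (rule measurable_component_singleton) simp
  have "integral\<^sup>L (bern_seq p) (\<lambda>\<omega>. a * (if \<omega> i then (1::real) else 0)) =
     integral\<^sup>L (distr (bern_seq p) (measure_pmf (bernoulli_pmf p)) (\<lambda>\<omega>. \<omega> i)) (\<lambda>b. a * (if b then (1::real) else 0))"
    by (rule integral_distr[symmetric, OF rv]) simp
  also have "distr (bern_seq p) (measure_pmf (bernoulli_pmf p)) (\<lambda>\<omega>. \<omega> i) = measure_pmf (bernoulli_pmf p)"
    unfolding bern_seq_def by (rule P.PiM_component) simp
  finally show ?thesis using assms by simp
qed

lemma tail_bound:
  assumes p: "0 \<le> p" "p \<le> 1" and I: "finite I"
    and a: "\<And>i. i \<in> I \<Longrightarrow> 0 \<le> a i \<and> a i \<le> \<delta>" and s: "sum a I \<le> 1"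
    and eta: "\<eta> > 0" and d: "\<delta> > 0"
  shows "measure (bern_seq p) {\<omega>. (\<Sum>i\<in>I. a i * (if \<omega> i then (1::real) else 0)) \<ge> p * sum a I + \<eta>}
     \<le> exp (-2 * \<eta>\<^sup>2 / \<delta>)"
proof (cases "(\<Sum>i\<in>I. (a i - 0)\<^sup>2) > 0")
  case False
  have "\<forall>i\<in>I. a i = 0"
  proof
    fix i assume i: "i \<in> I"
    have "(a i)\<^sup>2 \<le> (\<Sum>i\<in>I. (a i - 0)\<^sup>2)"
      using member_le_sum[of i I "\<lambda>i. (a i - 0)\<^sup>2"] i I by simp
    with False show "a i = 0" by (smt (verit) zero_less_power2)
  qed
  hence "{\<omega>. (\<Sum>i\<in>I. a i * (if \<omega> i then (1::real) else 0)) \<ge> p * sum a I + \<eta>} = {}"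
    using eta by auto
  thus ?thesis by simp
next
  case True
  interpret P: prob_space "bern_seq p" using bern_ps[OF p] .
  have ind: "P.indep_vars (\<lambda>_. borel) (\<lambda>i \<omega>. a i * (if \<omega> i then (1::real) else 0)) I"
  proof -
    have "P.indep_vars (\<lambda>_. measure_pmf (bernoulli_pmf p)) (\<lambda>i \<omega>. \<omega> i) I"
      by (rule P.indep_vars_subset[OF indep_coords[OF p]]) simp
    from P.indep_vars_compose2[OF this, where Y="\<lambda>i b. a i * (if b then (1::real) else 0)" and N="\<lambda>_. borel"]
    show ?thesis by simp
  qed
  interpret H: Hoeffding_ineq "bern_seq p" I "\<lambda>i \<omega>. a i * (if \<omega> i then (1::real) else 0)" "\<lambda>_. 0" a
      "\<Sum>i\<in>I. P.expectation (\<lambda>\<omega>. a i * (if \<omega> i then (1::real) else 0))"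
    by unfold_locales (auto simp: I ind a)
  have mu: "(\<Sum>i\<in>I. P.expectation (\<lambda>\<omega>. a i * (if \<omega> i then (1::real) else 0))) = p * sum a I"
    unfolding expect_ind[OF p] by (simp add: sum_distrib_left mult.commute)
  have "measure (bern_seq p) {\<omega>. (\<Sum>i\<in>I. a i * (if \<omega> i then (1::real) else 0)) \<ge> p * sum a I + \<eta>}
     \<le> exp (-2 * \<eta>\<^sup>2 / (\<Sum>i\<in>I. (a i - 0)\<^sup>2))"
    using H.Hoeffding_ineq_ge[of \<eta>, OF _ True] eta unfolding mu by simp
  also have "\<dots> \<le> exp (-2 * \<eta>\<^sup>2 / \<delta>)"
  proof -
    have "(\<Sum>i\<in>I. (a i - 0)\<^sup>2) \<le> (\<Sum>i\<in>I. \<delta> * a i)"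
      by (rule sum_mono) (use a in \<open>auto simp: power2_eq_square intro: mult_right_mono\<close>)
    also have "\<dots> \<le> \<delta>" using s d by (simp add: sum_distrib_left[symmetric])
    finally have le: "(\<Sum>i\<in>I. (a i - 0)\<^sup>2) \<le> \<delta>" .
    have "2 * \<eta>\<^sup>2 / \<delta> \<le> 2 * \<eta>\<^sup>2 / (\<Sum>i\<in>I. (a i - 0)\<^sup>2)"
      using le True eta by (intro divide_left_mono) auto
    thus ?thesis by simp
  qed
  finally show ?thesis .
qed


lemma S_lower:
  assumes "summable a" "\<And>i. a i \<ge> 0" "finite I"
  shows "(\<Sum>i\<in>I. a i * (if \<omega> i then (1::real) else 0)) \<le> S_gamma a \<omega>"
  unfolding S_gamma_def
  by (rule sum_le_suminf[OF summable_ind[OF assms(1,2)] assms(3)]) (simp add: assms(2))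

lemma S_upper:
  assumes "summable a" "\<And>i. a i \<ge> 0"
  shows "S_gamma a \<omega> \<le> (\<Sum>i<N. a i * (if \<omega> i then (1::real) else 0)) + (suminf a - (\<Sum>i<N. a i))"
proof -
  have s1: "summable (\<lambda>i. a i * (if \<omega> i then (1::real) else 0))" by (rule summable_ind[OF assms])
  have "S_gamma a \<omega> = (\<Sum>n. a (n + N) * (if \<omega> (n + N) then (1::real) else 0)) + (\<Sum>i<N. a i * (if \<omega> i then (1::real) else 0))"
    unfolding S_gamma_def by (rule suminf_split_initial_segment[OF s1])
  also have "(\<Sum>n. a (n + N) * (if \<omega> (n + N) then (1::real) else 0)) \<le> (\<Sum>n. a (n + N))"
  proof (rule suminf_le)
    show "summable (\<lambda>n. a (n + N) * (if \<omega> (n + N) then (1::real) else 0))"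
      using summable_iff_shift[of "\<lambda>i. a i * (if \<omega> i then (1::real) else 0)" N] s1 by simp
    show "summable (\<lambda>n. a (n + N))" using summable_iff_shift[of a N] assms(1) by simp
  qed (simp add: assms(2))
  also have "(\<Sum>n. a (n + N)) = suminf a - (\<Sum>i<N. a i)"
    using suminf_split_initial_segment[OF assms(1), of N] by simp
  finally show ?thesis by simp
qed

definition Qf :: "real \<Rightarrow> (nat \<Rightarrow> real) \<Rightarrow> real \<Rightarrow> real" where
  "Qf p c x = measure (bern_seq p) {\<omega>. S_gamma c \<omega> + (1 - suminf c) * p \<ge> x}"

lemma Qf_cont:
  assumes p: "0 \<le> p" "p \<le> 1" and c: "summable c" "\<And>i. c i \<ge> 0" and e: "\<epsilon> > 0"
  shows "\<exists>\<theta>>0. Qf p c (t - \<theta>) \<le> Qf p c t + \<epsilon>"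
proof -
  interpret P: prob_space "bern_seq p" using bern_ps[OF p] .
  define T where "T = (\<lambda>\<omega>. S_gamma c \<omega> + (1 - suminf c) * p)"
  have Tm: "T \<in> borel_measurable (bern_seq p)"
    unfolding T_def by (rule borel_measurable_add[OF meas_S[OF c] borel_measurable_const])
  define A where "A = (\<lambda>k::nat. {\<omega>. T \<omega> \<ge> t - 1 / (real k + 1)})"
  have "range A \<subseteq> sets (bern_seq p)"
  proof -
    have "\<And>k. {\<omega> \<in> space (bern_seq p). T \<omega> \<ge> t - 1 / (real k + 1)} \<in> sets (bern_seq p)"
      using Tm by (intro borel_measurable_le borel_measurable_const)
    thus ?thesis unfolding A_def by auto
  qed
  moreover have "decseq A"
    unfolding A_def decseq_def
  proof (intro allI impI subsetI)
    fix m n :: nat and x assume "m \<le> n" "x \<in> {\<omega>. t - 1 / (real n + 1) \<le> T \<omega>}"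
    moreover have "1 / (real n + 1) \<le> 1 / (real m + 1)"
      using \<open>m \<le> n\<close> by (intro divide_left_mono) auto
    ultimately show "x \<in> {\<omega>. t - 1 / (real m + 1) \<le> T \<omega>}" by auto
  qed
  ultimately have lim: "(\<lambda>k. measure (bern_seq p) (A k)) \<longlonglongrightarrow> measure (bern_seq p) (\<Inter>k. A k)"
    by (rule P.finite_Lim_measure_decseq)
  have inter: "(\<Inter>k. A k) = {\<omega>. T \<omega> \<ge> t}"
  proof (intro equalityI subsetI)
    fix x assume x: "x \<in> (\<Inter>k. A k)"
    show "x \<in> {\<omega>. T \<omega> \<ge> t}"
    proof (rule ccontr)
      assume "x \<notin> {\<omega>. T \<omega> \<ge> t}"
      hence "t - T x > 0" by simp
      then obtain k :: nat where k: "1 / (real k + 1) < t - T x"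
        by (rule nat_approx_posE) (simp add: add.commute)
      from x have "t - 1 / (real k + 1) \<le> T x" unfolding A_def by auto
      with k show False by linarith
    qed
  next
    fix x assume "x \<in> {\<omega>. T \<omega> \<ge> t}"
    hence tx: "T x \<ge> t" by simp
    have "t - 1 / (real k + 1) \<le> T x" for k :: nat
    proof -
      have "0 < 1 / (real k + 1)" by simp
      thus ?thesis using tx by linarith
    qed
    thus "x \<in> (\<Inter>k. A k)" unfolding A_def by simp
  qed
  have "eventually (\<lambda>k. measure (bern_seq p) (A k) < measure (bern_seq p) {\<omega>. T \<omega> \<ge> t} + \<epsilon>) sequentially"
    using lim unfolding inter using e by (intro order_tendstoD(2)) auto
  then obtain k where "measure (bern_seq p) (A k) < measure (bern_seq p) {\<omega>. T \<omega> \<ge> t} + \<epsilon>"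
    using eventually_sequentially by auto
  hence "Qf p c (t - 1 / (real k + 1)) \<le> Qf p c t + \<epsilon>"
    unfolding Qf_def A_def T_def by simp
  thus ?thesis by (intro exI[of _ "1 / (real k + 1)"]) auto
qed


lemma sets_ge:
  fixes f :: "(nat \<Rightarrow> bool) \<Rightarrow> real"
  assumes "f \<in> borel_measurable (bern_seq p)"
  shows "{\<omega>. x \<le> f \<omega>} \<in> sets (bern_seq p)"
  using borel_measurable_le[OF borel_measurable_const assms, of x] by simp

lemma limit_props:
  assumes cn: "\<And>n. stake_seq (cn n)" and lim: "\<And>i. (\<lambda>n. cn n i) \<longlonglongrightarrow> c i"
  shows "\<And>i. c i \<ge> 0" "decseq c" "summable c" "suminf c \<le> 1"
proof -
  have st: "\<And>n i. cn n i \<ge> 0" "\<And>n. decseq (cn n)" "\<And>n. cn n sums 1"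
    using cn unfolding stake_seq_def by auto
  show nn: "\<And>i. c i \<ge> 0"
    by (rule LIMSEQ_le_const[OF lim]) (use st in auto)
  show "decseq c"
    unfolding decseq_def
  proof (intro allI impI)
    fix m n :: nat assume "m \<le> n"
    hence "\<And>k. cn k n \<le> cn k m" using st(2) unfolding decseq_def by auto
    thus "c n \<le> c m" by (intro LIMSEQ_le[OF lim lim]) auto
  qed
  have ps: "(\<Sum>i<N. c i) \<le> 1" for N
  proof -
    have "(\<lambda>n. \<Sum>i<N. cn n i) \<longlonglongrightarrow> (\<Sum>i<N. c i)"
      by (intro tendsto_sum lim)
    moreover have "(\<Sum>i<N. cn n i) \<le> 1" for n
    proof -
      have "(\<Sum>i<N. cn n i) \<le> suminf (cn n)"
        by (rule sum_le_suminf) (use st sums_summable[OF st(3)] in auto)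
      thus ?thesis using sums_unique[OF st(3)] by simp
    qed
    ultimately show ?thesis by (intro LIMSEQ_le_const2) auto
  qed
  show "summable c"
    by (rule summableI_nonneg_bounded[where x=1]) (use nn ps in auto)
  thus "suminf c \<le> 1"
    by (intro suminf_le_const ps)
qed

lemma exp_neg_le: "y > 0 \<Longrightarrow> exp (- y) \<le> 1 / (y::real)"
proof -
  assume y: "y > 0"
  have "y \<le> exp y" using exp_ge_add_one_self[of y] by linarith
  hence "1 / exp y \<le> 1 / y" using y by (intro divide_left_mono) auto
  thus ?thesis by (simp add: exp_minus field_simps)
qed


lemma usc:
  assumes p: "0 \<le> p" "p \<le> 1"
    and cn: "\<And>n. stake_seq (cn n)" and lim: "\<And>i. (\<lambda>n. cn n i) \<longlonglongrightarrow> c i"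
    and tl: "tn \<longlonglongrightarrow> t" and e: "\<epsilon> > 0"
  shows "eventually (\<lambda>n. prob_ge p (cn n) (tn n) \<le> Qf p c t + \<epsilon>) sequentially"
proof -
  interpret P: prob_space "bern_seq p" using bern_ps[OF p] .
  note cp = limit_props[OF cn lim]
  have st: "\<And>n i. cn n i \<ge> 0" "\<And>n. decseq (cn n)" "\<And>n. cn n sums 1"
    using cn unfolding stake_seq_def by auto
  obtain \<theta> where th: "\<theta> > 0" "Qf p c (t - \<theta>) \<le> Qf p c t + \<epsilon> / 2"
    using Qf_cont[OF p cp(3) cp(1), of "\<epsilon> / 2" t] e by auto
  define \<eta> where "\<eta> = \<theta> / 6"
  have eta: "\<eta> > 0" using th by (simp add: \<eta>_def)
  define \<delta> where "\<delta> = \<eta>\<^sup>2 * \<epsilon> / 2"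
  have d: "\<delta> > 0" using eta e by (simp add: \<delta>_def)
  have expb: "exp (-2 * \<eta>\<^sup>2 / \<delta>) \<le> \<epsilon> / 2"
  proof -
    have "exp (-2 * \<eta>\<^sup>2 / \<delta>) = exp (- (4 / \<epsilon>))"
      using eta e by (simp add: \<delta>_def field_simps)
    also have "\<dots> \<le> 1 / (4 / \<epsilon>)" using e by (intro exp_neg_le) simp
    also have "\<dots> \<le> \<epsilon> / 2" using e by simp
    finally show ?thesis .
  qed
  have c0: "c \<longlonglongrightarrow> 0" by (rule summable_LIMSEQ_zero[OF cp(3)])
  have cs: "(\<lambda>K. \<Sum>i<K. c i) \<longlonglongrightarrow> suminf c" by (rule summable_LIMSEQ[OF cp(3)])
  have "eventually (\<lambda>K. c K < \<delta> / 2) sequentially"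
    using c0 d by (intro order_tendstoD(2)) auto
  moreover have "eventually (\<lambda>K. suminf c - \<eta> < (\<Sum>i<K. c i)) sequentially"
    using cs eta by (intro order_tendstoD(1)) auto
  ultimately have "eventually (\<lambda>K. c K < \<delta> / 2 \<and> suminf c - \<eta> < (\<Sum>i<K. c i)) sequentially"
    by (rule eventually_conj)
  then obtain K where K1: "c K < \<delta> / 2" and K2: "suminf c - \<eta> < (\<Sum>i<K. c i)"
    using eventually_sequentially by auto
  have ev1: "eventually (\<lambda>n. (\<Sum>i<K. \<bar>cn n i - c i\<bar>) < \<eta>) sequentially"
  proof -
    have "(\<lambda>n. \<Sum>i<K. \<bar>cn n i - c i\<bar>) \<longlonglongrightarrow> (\<Sum>i<K. \<bar>c i - c i\<bar>)"
      by (intro tendsto_sum tendsto_rabs tendsto_diff lim tendsto_const)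
    thus ?thesis using eta by (intro order_tendstoD(2)) auto
  qed
  have ev2: "eventually (\<lambda>n. cn n K < \<delta>) sequentially"
    by (rule order_tendstoD(2)[OF lim[of K]]) (use K1 d in linarith)
  have ev3: "eventually (\<lambda>n. t - \<eta> < tn n) sequentially"
    using tl eta by (intro order_tendstoD(1)) auto
  show ?thesis
    using eventually_conj[OF ev1 eventually_conj[OF ev2 ev3]]
  proof (rule eventually_mono)
    fix n assume H: "(\<Sum>i<K. \<bar>cn n i - c i\<bar>) < \<eta> \<and> cn n K < \<delta> \<and> t - \<eta> < tn n"
    define a where "a = cn n"
    have a0: "\<And>i. a i \<ge> 0" and adec: "decseq a" and asum: "summable a" and a1: "suminf a = 1"
      using st[of n] sums_summable[OF st(3)[of n]] sums_unique[OF st(3)[of n]] unfolding a_def by auto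
    have "(\<lambda>N. \<Sum>i<N. a i) \<longlonglongrightarrow> 1" using summable_LIMSEQ[OF asum] a1 by simp
    hence "eventually (\<lambda>N. 1 - \<eta> < (\<Sum>i<N. a i)) sequentially"
      using eta by (intro order_tendstoD(1)) auto
    then obtain N0 where N0: "\<And>N. N \<ge> N0 \<Longrightarrow> 1 - \<eta> < (\<Sum>i<N. a i)"
      using eventually_sequentially by auto
    define N where "N = max K N0"
    have KN: "K \<le> N" and N1: "1 - \<eta> < (\<Sum>i<N. a i)" using N0[of N] by (auto simp: N_def)
    have aN1: "(\<Sum>i<N. a i) \<le> 1"
      using sum_le_suminf[OF asum, of "{..<N}"] a0 a1 by simp
    have ad: "\<And>i. i \<in> {K..<N} \<Longrightarrow> 0 \<le> a i \<and> a i \<le> \<delta>"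
    proof -
      fix i assume "i \<in> {K..<N}"
      hence "a i \<le> a K" using adec unfolding decseq_def by auto
      thus "0 \<le> a i \<and> a i \<le> \<delta>" using H a0[of i] unfolding a_def by auto
    qed
    have split: "\<And>f::nat \<Rightarrow> real. (\<Sum>i<N. f i) = (\<Sum>i<K. f i) + (\<Sum>i\<in>{K..<N}. f i)"
    proof -
      fix f :: "nat \<Rightarrow> real"
      have "{..<N} = {..<K} \<union> {K..<N}" using KN by auto
      thus "(\<Sum>i<N. f i) = (\<Sum>i<K. f i) + (\<Sum>i\<in>{K..<N}. f i)"
        by (simp add: sum.union_disjoint[of "{..<K}" "{K..<N}"] ivl_disj_int)
    qed
    have sKN: "sum a {K..<N} \<le> 1"
      using split[of a] aN1 a0 by (smt (verit) sum_nonneg)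
    define T where "T = (\<lambda>\<omega>. S_gamma c \<omega> + (1 - suminf c) * p)"
    define E1 where "E1 = {\<omega>. t - \<theta> \<le> T \<omega>}"
    define E2 where "E2 = {\<omega>. (\<Sum>i\<in>{K..<N}. a i * (if \<omega> i then (1::real) else 0)) \<ge> p * sum a {K..<N} + \<eta>}"
    have E1m: "E1 \<in> sets (bern_seq p)" unfolding E1_def T_def
      by (intro sets_ge borel_measurable_add[OF meas_S[OF cp(3) cp(1)] borel_measurable_const])
    have E2m: "E2 \<in> sets (bern_seq p)" unfolding E2_def
      by (rule sets_ge[OF meas_fsum])
    have incl: "{\<omega>. tn n \<le> S_gamma a \<omega>} \<subseteq> E1 \<union> E2"
    proof
      fix \<omega> assume "\<omega> \<in> {\<omega>. tn n \<le> S_gamma a \<omega>}"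
      hence Sge: "tn n \<le> S_gamma a \<omega>" by simp
      show "\<omega> \<in> E1 \<union> E2"
      proof (cases "\<omega> \<in> E2")
        case True thus ?thesis by simp
      next
        case False
        define ind where "ind = (\<lambda>i. if \<omega> i then (1::real) else 0)"
        have ind01: "\<And>i. 0 \<le> ind i \<and> ind i \<le> 1" by (simp add: ind_def)
        have tailsm: "(\<Sum>i\<in>{K..<N}. a i * ind i) < p * sum a {K..<N} + \<eta>"
          using False unfolding E2_def ind_def by simp
        have up: "S_gamma a \<omega> \<le> (\<Sum>i<N. a i * ind i) + (1 - (\<Sum>i<N. a i))"
          using S_upper[OF asum a0, of \<omega> N] a1 unfolding ind_def by simp
        have d1: "(\<Sum>i<K. a i * ind i) \<le> (\<Sum>i<K. c i * ind i) + \<eta>"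
        proof -
          have "(\<Sum>i<K. a i * ind i) - (\<Sum>i<K. c i * ind i) = (\<Sum>i<K. (a i - c i) * ind i)"
            by (simp add: sum_subtractf[symmetric] algebra_simps)
          also have "\<dots> \<le> (\<Sum>i<K. \<bar>a i - c i\<bar>)"
          proof (rule sum_mono)
            fix i
            have "(a i - c i) * ind i \<le> \<bar>(a i - c i) * ind i\<bar>" by simp
            also have "\<dots> = \<bar>a i - c i\<bar> * ind i" using ind01[of i] by (simp add: abs_mult)
            also have "\<dots> \<le> \<bar>a i - c i\<bar>" using ind01[of i] by (simp add: mult_left_le)
            finally show "(a i - c i) * ind i \<le> \<bar>a i - c i\<bar>" .
          qed
          finally show ?thesis using H unfolding a_def by simp
        qed
        have d2: "(\<Sum>i<K. c i) - \<eta> \<le> (\<Sum>i<K. a i)"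
        proof -
          have "(\<Sum>i<K. c i) - (\<Sum>i<K. a i) = (\<Sum>i<K. c i - a i)" by (simp add: sum_subtractf)
          also have "\<dots> \<le> (\<Sum>i<K. \<bar>a i - c i\<bar>)" by (rule sum_mono) auto
          finally show ?thesis using H unfolding a_def by simp
        qed
        have sKN2: "sum a {K..<N} \<le> 1 - (\<Sum>i<K. c i) + \<eta>"
          using split[of a] aN1 d2 by linarith
        have pm1: "p * sum a {K..<N} \<le> p * (1 - (\<Sum>i<K. c i) + \<eta>)"
          using sKN2 p by (intro mult_left_mono) auto
        have pm2: "p * (1 - (\<Sum>i<K. c i) + \<eta>) \<le> p * (1 - suminf c) + 2 * \<eta>"
        proof -
          have "p * (1 - (\<Sum>i<K. c i) + \<eta>) \<le> p * ((1 - suminf c) + 2 * \<eta>)"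
            using K2 p by (intro mult_left_mono) auto
          also have "\<dots> = p * (1 - suminf c) + p * (2 * \<eta>)" by (simp add: algebra_simps)
          also have "p * (2 * \<eta>) \<le> 2 * \<eta>" using p eta by (simp add: mult_left_le_one_le)
          finally show ?thesis by simp
        qed
        have low: "(\<Sum>i<K. c i * ind i) \<le> S_gamma c \<omega>"
          using S_lower[OF cp(3) cp(1), of "{..<K}" \<omega>] unfolding ind_def by simp
        have "S_gamma a \<omega> \<le> (\<Sum>i<K. a i * ind i) + (\<Sum>i\<in>{K..<N}. a i * ind i) + \<eta>"
          using up split[of "\<lambda>i. a i * ind i"] N1 by linarith
        hence "S_gamma a \<omega> \<le> T \<omega> + 5 * \<eta>"
          using d1 tailsm pm1 pm2 low unfolding T_def by (simp add: mult.commute)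
        hence "t - \<theta> \<le> T \<omega>" using Sge H unfolding \<eta>_def by linarith
        thus ?thesis unfolding E1_def by simp
      qed
    qed
    have "prob_ge p (cn n) (tn n) = measure (bern_seq p) {\<omega>. tn n \<le> S_gamma a \<omega>}"
      unfolding prob_ge_def a_def by simp
    also have "\<dots> \<le> measure (bern_seq p) (E1 \<union> E2)"
      using incl E1m E2m by (intro P.finite_measure_mono) auto
    also have "\<dots> \<le> measure (bern_seq p) E1 + measure (bern_seq p) E2"
      using E1m E2m by (intro measure_subadditive) auto
    also have "measure (bern_seq p) E1 = Qf p c (t - \<theta>)"
      unfolding E1_def T_def Qf_def by simp
    also have "measure (bern_seq p) E2 \<le> exp (-2 * \<eta>\<^sup>2 / \<delta>)"
      unfolding E2_def by (rule tail_bound[OF p _ ad sKN eta d]) simp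
    finally show "prob_ge p (cn n) (tn n) \<le> Qf p c t + \<epsilon>"
      using th expb by linarith
  qed
qed


lemma prob_ge_nn: "prob_ge p c u \<ge> 0"
  unfolding prob_ge_def by simp

lemma prob_ge_le1:
  assumes "0 \<le> p" "p \<le> 1" shows "prob_ge p c u \<le> 1"
proof -
  interpret P: prob_space "bern_seq p" using bern_ps[OF assms] .
  show ?thesis unfolding prob_ge_def by simp
qed

lemma stake_e0: "stake_seq (\<lambda>i. if i = 0 then 1 else 0)"
  unfolding stake_seq_def
proof (intro conjI allI)
  show "decseq (\<lambda>i::nat. if i = 0 then 1 else (0::real))"
    unfolding decseq_def by auto
  show "(\<lambda>i::nat. if i = 0 then 1 else (0::real)) sums 1"
    using sums_single[of 0 "\<lambda>_. 1::real"] by simp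
qed auto

lemma pi_set_ne: "{prob_ge p c u | c. stake_seq c} \<noteq> {}"
  using stake_e0 by blast

lemma pi_set_bdd: "0 \<le> p \<Longrightarrow> p \<le> 1 \<Longrightarrow> bdd_above {prob_ge p c u | c. stake_seq c}"
  using prob_ge_le1 by (intro bdd_aboveI[where M=1]) auto

lemma prob_le_pi: "0 \<le> p \<Longrightarrow> p \<le> 1 \<Longrightarrow> stake_seq c \<Longrightarrow> prob_ge p c u \<le> pi_fun p u"
  unfolding pi_fun_def by (rule cSup_upper[OF _ pi_set_bdd]) auto

lemma prob_ge_mono:
  assumes "0 \<le> p" "p \<le> 1" "u \<le> v" "stake_seq c"
  shows "prob_ge p c v \<le> prob_ge p c u"
proof -
  interpret P: prob_space "bern_seq p" using bern_ps[OF assms(1,2)] .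
  have c: "summable c" "\<And>i. c i \<ge> 0" using assms(4) unfolding stake_seq_def by (auto simp: sums_summable)
  show ?thesis unfolding prob_ge_def
    using assms(3) by (intro P.finite_measure_mono) (auto intro!: sets_ge meas_S[OF c])
qed

lemma pi_mono:
  assumes "0 \<le> p" "p \<le> 1" "u \<le> v"
  shows "pi_fun p v \<le> pi_fun p u"
  unfolding pi_fun_def[of p v]
proof (rule cSup_least[OF pi_set_ne])
  fix x assume "x \<in> {prob_ge p c v | c. stake_seq c}"
  then obtain c where "stake_seq c" "x = prob_ge p c v" by auto
  thus "x \<le> pi_fun p u" using prob_ge_mono[OF assms] prob_le_pi[OF assms(1,2)] by (meson order.trans)
qed

lemma rescale:
  assumes p: "0 \<le> p" "p \<le> 1" and u: "p < u"
    and c: "\<And>i. c i \<ge> 0" "decseq c" "summable c" "suminf c \<le> 1"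
  shows "\<exists>c'. stake_seq c' \<and> Qf p c u \<le> prob_ge p c' u"
proof (cases "suminf c = 0")
  case True
  have "\<And>i. c i = 0" using True suminf_eq_zero_iff[OF c(3)] c(1) by auto
  hence "\<And>\<omega>. S_gamma c \<omega> = 0" unfolding S_gamma_def by simp
  hence "Qf p c u = 0" unfolding Qf_def using True u by simp
  thus ?thesis by (intro exI[of _ "\<lambda>i. if i = 0 then 1 else 0"] conjI stake_e0) (simp add: prob_ge_nn)
next
  case False
  interpret P: prob_space "bern_seq p" using bern_ps[OF p] .
  define \<sigma> where "\<sigma> = suminf c"
  have sp: "\<sigma> > 0" using False suminf_nonneg[OF c(3)] c(1) unfolding \<sigma>_def by force
  define c' where "c' = (\<lambda>i. c i / \<sigma>)"
  have st: "stake_seq c'"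
    unfolding stake_seq_def
  proof (intro conjI allI)
    show "\<And>i. 0 \<le> c' i" using c(1) sp by (simp add: c'_def)
    show "decseq c'" using c(2) sp unfolding c'_def decseq_def by (auto intro: divide_right_mono)
    have "c' sums (\<sigma> / \<sigma>)" unfolding c'_def \<sigma>_def
      by (rule sums_divide) (rule summable_sums[OF c(3)])
    thus "c' sums 1" using sp by simp
  qed
  have c's: "summable c'" "\<And>i. c' i \<ge> 0" using st unfolding stake_seq_def by (auto simp: sums_summable)
  have Sc': "S_gamma c' \<omega> = S_gamma c \<omega> / \<sigma>" for \<omega>
    unfolding S_gamma_def c'_def
    using suminf_divide[OF summable_ind[OF c(3) c(1)], of \<omega> \<sigma>] by (simp add: algebra_simps)
  have incl: "{\<omega>. u \<le> S_gamma c \<omega> + (1 - suminf c) * p} \<subseteq> {\<omega>. u \<le> S_gamma c' \<omega>}"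
  proof
    fix \<omega> assume "\<omega> \<in> {\<omega>. u \<le> S_gamma c \<omega> + (1 - suminf c) * p}"
    hence h: "u \<le> S_gamma c \<omega> + (1 - \<sigma>) * p" unfolding \<sigma>_def by simp
    have "(1 - \<sigma>) * p \<le> (1 - \<sigma>) * u" using c(4) u unfolding \<sigma>_def by (intro mult_left_mono) auto
    hence "\<sigma> * u \<le> S_gamma c \<omega>" using h by (simp add: algebra_simps)
    hence "u \<le> S_gamma c \<omega> / \<sigma>" using sp by (simp add: field_simps mult.commute)
    thus "\<omega> \<in> {\<omega>. u \<le> S_gamma c' \<omega>}" by (simp add: Sc')
  qed
  have "Qf p c u \<le> prob_ge p c' u"
    unfolding Qf_def prob_ge_def using incl
    by (intro P.finite_measure_mono) (auto intro!: sets_ge meas_S[OF c's])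
  thus ?thesis using st by blast
qed


lemma stake_bound: "stake_seq c \<Longrightarrow> 0 \<le> c i \<and> c i \<le> 1"
proof -
  assume "stake_seq c"
  hence st: "\<And>i. c i \<ge> 0" "c sums 1" unfolding stake_seq_def by auto
  have "sum c {i} \<le> suminf c"
    by (rule sum_le_suminf) (use st sums_summable[OF st(2)] in auto)
  thus ?thesis using st sums_unique[OF st(2)] by simp
qed

lemma compact_ext:
  fixes cn :: "nat \<Rightarrow> nat \<Rightarrow> real"
  assumes cn: "\<And>n. stake_seq (cn n)"
  shows "\<exists>r. strict_mono r \<and> (\<forall>i. convergent (\<lambda>k. cn (r k) i))"
proof -
  let ?P = "\<lambda>i s. convergent (\<lambda>k. cn (s k) i)"
  interpret nat: subseqs ?P
  proof (unfold convergent_def, unfold subseqs_def, auto)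
    fix n :: nat and s :: "nat \<Rightarrow> nat" assume s: "strict_mono s"
    have "\<And>k. cn (s k) n \<in> {0..1}"
      using stake_bound[OF cn] by auto
    hence "\<exists>l s'. strict_mono s' \<and> ((\<lambda>k. cn (s k) n) \<circ> s') \<longlonglongrightarrow> l"
      using compact_Icc compact_imp_seq_compact seq_compactE by metis
    thus "\<exists>s'. strict_mono (s'::nat\<Rightarrow>nat) \<and> (\<exists>l. (\<lambda>k. cn (s (s' k)) n) \<longlonglongrightarrow> l)"
      by (auto simp: comp_def)
  qed
  define d where "d = nat.diagseq"
  have subseq: "strict_mono d"
    unfolding d_def using nat.subseq_diagseq by auto
  have rat_cnv: "?P n d" for n
  proof -
    have Pn_seqseq: "?P n (nat.seqseq (Suc n))"
      by (rule nat.seqseq_holds)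
    have 1: "(\<lambda>k. cn ((nat.seqseq (Suc n) \<circ> (\<lambda>k. nat.fold_reduce (Suc n) k
      (Suc n + k))) k) n) = (\<lambda>k. cn (nat.seqseq (Suc n) k) n) \<circ>
      (\<lambda>k. nat.fold_reduce (Suc n) k (Suc n + k))"
      by auto
    have 2: "?P n (d \<circ> ((+) (Suc n)))"
      unfolding d_def nat.diagseq_seqseq 1
      by (intro convergent_subseq_convergent Pn_seqseq nat.subseq_diagonal_rest)
    then obtain L where 3: "(\<lambda>na. cn (d (na + Suc n)) n) \<longlonglongrightarrow> L"
      by (auto simp: add.commute dest: convergentD)
    then have "(\<lambda>k. cn (d k) n) \<longlonglongrightarrow> L"
      by (rule LIMSEQ_offset)
    then show ?thesis
      by (auto simp: convergent_def)
  qed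
  thus ?thesis using subseq by blast
qed


lemma key:
  fixes cn :: "nat \<Rightarrow> nat \<Rightarrow> real"
  assumes p: "0 \<le> p" "p \<le> 1" and ps: "p < s" and cn: "\<And>n. stake_seq (cn n)" and un: "un \<longlonglongrightarrow> s"
  shows "\<exists>r c'. strict_mono r \<and> stake_seq c' \<and>
     (\<forall>\<epsilon>>0. eventually (\<lambda>k. prob_ge p (cn (r k)) (un (r k)) \<le> prob_ge p c' s + \<epsilon>) sequentially)"
proof -
  obtain r where r: "strict_mono r" "\<And>i. convergent (\<lambda>k. cn (r k) i)"
    using compact_ext[of cn] cn by blast
  define c where "c = (\<lambda>i. lim (\<lambda>k. cn (r k) i))"
  have lim: "\<And>i. (\<lambda>k. cn (r k) i) \<longlonglongrightarrow> c i"
    unfolding c_def using r(2) convergent_LIMSEQ_iff by blast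
  have cn': "\<And>k. stake_seq (cn (r k))" using cn by simp
  have ul: "(\<lambda>k. un (r k)) \<longlonglongrightarrow> s"
    using LIMSEQ_subseq_LIMSEQ[OF un r(1)] by (simp add: comp_def)
  note cp = limit_props[OF cn' lim]
  obtain c' where c': "stake_seq c'" "Qf p c s \<le> prob_ge p c' s"
    using rescale[OF p ps cp] by blast
  have "\<forall>\<epsilon>>0. eventually (\<lambda>k. prob_ge p (cn (r k)) (un (r k)) \<le> prob_ge p c' s + \<epsilon>) sequentially"
  proof (intro allI impI)
    fix \<epsilon> :: real assume e: "\<epsilon> > 0"
    show "eventually (\<lambda>k. prob_ge p (cn (r k)) (un (r k)) \<le> prob_ge p c' s + \<epsilon>) sequentially"
      using usc[OF p cn' lim ul e] by (rule eventually_mono) (use c'(2) in linarith)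
  qed
  thus ?thesis using r(1) c'(1) by blast
qed

theorem theorem7:
  fixes p t :: real
  assumes "0 \<le> p" and "p < t" and "t \<le> 1"
  shows "(\<exists>c. stake_seq c \<and> pi_fun p t = prob_ge p c t) \<and>
         (\<forall>s\<in>{p..1}. ((\<lambda>u. pi_fun p u) \<longlongrightarrow> pi_fun p s) (at s within {p..<s}))"
proof
  have p: "0 \<le> p" "p \<le> 1" using assms by auto
  have near: "\<And>u n. \<exists>c. stake_seq c \<and> pi_fun p u - 1 / (real n + 1) < prob_ge p c u"
  proof -
    fix u :: real and n :: nat
    have "pi_fun p u - 1 / (real n + 1) < Sup {prob_ge p c u | c. stake_seq c}"
      unfolding pi_fun_def[symmetric] by simp
    from less_cSup_iff[OF pi_set_ne pi_set_bdd[OF p], THEN iffD1, OF this]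
    obtain x where "x \<in> {prob_ge p c u | c. stake_seq c}" "pi_fun p u - 1 / (real n + 1) < x" by blast
    thus "\<exists>c. stake_seq c \<and> pi_fun p u - 1 / (real n + 1) < prob_ge p c u" by blast
  qed
  have inv: "\<And>r::nat\<Rightarrow>nat. strict_mono r \<Longrightarrow> \<epsilon> > 0 \<Longrightarrow> eventually (\<lambda>k. 1 / (real (r k) + 1) < \<epsilon>) sequentially" for \<epsilon> :: real
  proof -
    fix r :: "nat \<Rightarrow> nat" assume r: "strict_mono r" and e: "\<epsilon> > 0"
    obtain k0 :: nat where k0: "1 / (real k0 + 1) < \<epsilon>"
      using e by (rule nat_approx_posE) (simp add: add.commute)
    show "eventually (\<lambda>k. 1 / (real (r k) + 1) < \<epsilon>) sequentially"
      unfolding eventually_sequentially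
    proof (intro exI allI impI)
      fix k assume "k0 \<le> k"
      hence "real k0 \<le> real (r k)" using seq_suble[OF r, of k] by simp
      hence "1 / (real (r k) + 1) \<le> 1 / (real k0 + 1)" by (intro divide_left_mono) auto
      thus "1 / (real (r k) + 1) < \<epsilon>" using k0 by linarith
    qed
  qed
  show "\<exists>c. stake_seq c \<and> pi_fun p t = prob_ge p c t"
  proof -
    have "\<forall>n. \<exists>c. stake_seq c \<and> pi_fun p t - 1 / (real n + 1) < prob_ge p c t"
      using near by blast
    from choice[OF this] obtain cn where cn0: "\<forall>n. stake_seq (cn n) \<and> pi_fun p t - 1 / (real n + 1) < prob_ge p (cn n) t"
      by blast
    hence cn: "\<And>n. stake_seq (cn n)" "\<And>n. pi_fun p t - 1 / (real n + 1) < prob_ge p (cn n) t" by auto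
    have "\<exists>r c'. strict_mono r \<and> stake_seq c' \<and>
     (\<forall>\<epsilon>>0. eventually (\<lambda>k. prob_ge p (cn (r k)) ((\<lambda>_. t) (r k)) \<le> prob_ge p c' t + \<epsilon>) sequentially)"
      by (rule key[OF p assms(2)]) (use cn(1) in auto)
    then obtain r c' where rc: "strict_mono r" "stake_seq c'"
      "\<forall>\<epsilon>>0. eventually (\<lambda>k. prob_ge p (cn (r k)) t \<le> prob_ge p c' t + \<epsilon>) sequentially"
      by auto
    have "pi_fun p t \<le> prob_ge p c' t + 2 * \<epsilon>" if e: "\<epsilon> > 0" for \<epsilon>
    proof -
      have "eventually (\<lambda>k. prob_ge p (cn (r k)) t \<le> prob_ge p c' t + \<epsilon> \<and> 1 / (real (r k) + 1) < \<epsilon>) sequentially"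
        using eventually_conj[OF rc(3)[rule_format, OF e] inv[OF rc(1) e]] by simp
      then obtain k where "prob_ge p (cn (r k)) t \<le> prob_ge p c' t + \<epsilon>" "1 / (real (r k) + 1) < \<epsilon>"
        using eventually_sequentially by auto
      thus ?thesis using cn(2)[of "r k"] by linarith
    qed
    hence H: "\<And>\<epsilon>. \<epsilon> > 0 \<Longrightarrow> pi_fun p t \<le> prob_ge p c' t + 2 * \<epsilon>" by blast
    have "pi_fun p t \<le> prob_ge p c' t"
    proof (rule field_le_epsilon)
      fix e :: real assume "e > 0"
      thus "pi_fun p t \<le> prob_ge p c' t + e" using H[of "e / 2"] by simp
    qed
    moreover have "prob_ge p c' t \<le> pi_fun p t" by (rule prob_le_pi[OF p rc(2)])
    ultimately show ?thesis using rc(2) by (intro exI[of _ c']) auto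
  qed
  show "\<forall>s\<in>{p..1}. ((\<lambda>u. pi_fun p u) \<longlongrightarrow> pi_fun p s) (at s within {p..<s})"
  proof
    fix s assume s: "s \<in> {p..1}"
    show "((\<lambda>u. pi_fun p u) \<longlongrightarrow> pi_fun p s) (at s within {p..<s})"
    proof (cases "s = p")
      case True
      thus ?thesis by simp
    next
      case False
      hence ps: "p < s" using s by simp
      have claim: "\<exists>u0<s. pi_fun p u0 \<le> pi_fun p s + \<epsilon>" if e: "\<epsilon> > 0" for \<epsilon>
      proof (rule ccontr)
        assume "\<not> (\<exists>u0<s. pi_fun p u0 \<le> pi_fun p s + \<epsilon>)"
        hence big: "\<And>u. u < s \<Longrightarrow> pi_fun p u > pi_fun p s + \<epsilon>" by force
        define un where "un = (\<lambda>n::nat. s - (s - p) / 2 * inverse (real (Suc n)))"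
        have unl: "un n < s" for n unfolding un_def using ps by simp
        have "(\<lambda>n::nat. (s - p) / 2 * inverse (real (Suc n))) \<longlonglongrightarrow> 0"
          using tendsto_mult[OF tendsto_const LIMSEQ_inverse_real_of_nat, of "(s - p) / 2"] by simp
        hence "(\<lambda>n::nat. s - (s - p) / 2 * inverse (real (Suc n))) \<longlonglongrightarrow> s - 0"
          by (rule tendsto_diff[OF tendsto_const])
        hence unt: "un \<longlonglongrightarrow> s" unfolding un_def by simp
        have "\<forall>n. \<exists>c. stake_seq c \<and> pi_fun p (un n) - 1 / (real n + 1) < prob_ge p c (un n)"
          using near by blast
        from choice[OF this] obtain cn where cn0: "\<forall>n. stake_seq (cn n) \<and> pi_fun p (un n) - 1 / (real n + 1) < prob_ge p (cn n) (un n)"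
          by blast
        hence cn: "\<And>n. stake_seq (cn n)" "\<And>n. pi_fun p (un n) - 1 / (real n + 1) < prob_ge p (cn n) (un n)" by auto
        have "\<exists>r c'. strict_mono r \<and> stake_seq c' \<and>
          (\<forall>\<epsilon>>0. eventually (\<lambda>k. prob_ge p (cn (r k)) (un (r k)) \<le> prob_ge p c' s + \<epsilon>) sequentially)"
          by (rule key[OF p ps]) (use cn(1) unt in auto)
        then obtain r c' where rc: "strict_mono r" "stake_seq c'"
          "\<forall>\<epsilon>>0. eventually (\<lambda>k. prob_ge p (cn (r k)) (un (r k)) \<le> prob_ge p c' s + \<epsilon>) sequentially"
          by blast
        have e2: "\<epsilon> / 2 > 0" using e by simp
        have "eventually (\<lambda>k. prob_ge p (cn (r k)) (un (r k)) \<le> prob_ge p c' s + \<epsilon> / 2 \<and> 1 / (real (r k) + 1) < \<epsilon> / 2) sequentially"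
          using eventually_conj[OF rc(3)[rule_format, OF e2] inv[OF rc(1) e2]] by simp
        then obtain k where k: "prob_ge p (cn (r k)) (un (r k)) \<le> prob_ge p c' s + \<epsilon> / 2" "1 / (real (r k) + 1) < \<epsilon> / 2"
          using eventually_sequentially by auto
        have "prob_ge p c' s \<le> pi_fun p s" by (rule prob_le_pi[OF p rc(2)])
        thus False using k cn(2)[of "r k"] big[OF unl[of "r k"]] by linarith
      qed
      show ?thesis
      proof (rule tendstoI)
        fix \<epsilon> :: real assume e: "\<epsilon> > 0"
        obtain u0 where u0: "u0 < s" "pi_fun p u0 \<le> pi_fun p s + \<epsilon> / 2"
          using claim[of "\<epsilon> / 2"] e by auto
        show "eventually (\<lambda>u. dist (pi_fun p u) (pi_fun p s) < \<epsilon>) (at s within {p..<s})"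
          unfolding eventually_at
        proof (intro exI[of _ "s - u0"] conjI ballI impI)
          show "s - u0 > 0" using u0 by simp
          fix u assume u: "u \<in> {p..<s}" "u \<noteq> s \<and> dist u s < s - u0"
          hence "u0 \<le> u" "u \<le> s" by (auto simp: dist_real_def)
          hence "pi_fun p u \<le> pi_fun p u0" "pi_fun p s \<le> pi_fun p u"
            using pi_mono[OF p] by auto
          thus "dist (pi_fun p u) (pi_fun p s) < \<epsilon>"
            using u0 e by (simp add: dist_real_def)
        qed
      qed
    qed
  qed
qed

end
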